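(* In the elastoplastic setting described in the context, let $(\mathbf{a}^*,\mathbf{b}^*,\mathbf{c}^* )$ be the solution of $\mathbf{F}(\mathbf{a}^*,\mathbf{b}^*,\mathbf{c}^* )=\mathbf{0}$, and let $\mathbf{H}^*\in\partial\mathbf{F}(\mathbf{a}^*,\mathbf{b}^*,\mathbf{c}^* )$ with diagonal blocks $\mathbf{X}_i,\mathbf{Y}_i\in\mathbb{R}^{L\times L}$ ($i=1,\dots,N$) of its last block row, which are of the form $$\mathbf{X}_i=\tau_i\varrho\,\mathbf{c}^*_i\otimes\frac{\mathbf{v}^*_{\varrho,i}}{|\mathbf{v}^*_{\varrho,i}|}-\varrho\sigma_i\mathbf{I}_{L\times L},\qquad \mathbf{Y}_i=\tau_i\Big(\mathbf{c}^*_i\otimes\frac{\mathbf{v}^*_{\varrho,i}}{|\mathbf{v}^*_{\varrho,i}|}+(|\mathbf{v}^*_{\varrho,i}|-\sigma_i)\mathbf{I}_{L\times L}\Big)$$ with $\tau_i\in[0,1]$, $\tau_i=0$ if $|\mathbf{v}^*_{\varrho,i}|<\sigma_i$ and $\tau_i=1$ if $|\mathbf{v}^*_{\varrho,i}|>\sigma_i$, where $\mathbf{v}^*_{\varrho,i}=\mathbf{c}^*_i+\varrho\mathbf{b}^*_i$. Then for every $i\in\{1,\dots,N\}$ the pair $(\mathbf{X}_i,\mathbf{Y}_i)$ is eigencomplementary.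
   Context: Elastoplastic setting. Let $d\in\{2,3\}$, $\Omega\subset\mathbb{R}^d$ a bounded polygonal domain with Lipschitz boundary $\Gamma$, $\Gamma_D\subseteq\Gamma$ closed with positive surface measure, $\Gamma_N=\Gamma\setminus\Gamma_D$. $\mathbb{S}_{d,0}$ denotes the symmetric trace-free $d\times d$ matrices with Frobenius inner product. $\mathbb{C},\mathbb{H}$ are fourth-order elasticity and hardening tensors with the usual symmetries, uniformly elliptic and bounded; $\sigma_y>0$ constant. $V=\{\mathbf{v}\in H^1(\Omega,\mathbb{R}^d):\mathbf{v}|_{\Gamma_D}=\mathbf{0}\}$, $\mathbf{f}\in V^*$, $\mathbf{g}\in H^{-1/2}(\Gamma_N,\mathbb{R}^d)$, $\ell(\mathbf{v})=\langle\mathbf{f},\mathbf{v}\rangle+\langle\mathbf{g},\mathbf{v}\rangle_{\Gamma_N}$, $a((\mathbf{u},\mathbf{p}),(\mathbf{v},\mathbf{q}))=\int_\Omega\mathbb{C}(\boldsymbol\varepsilon(\mathbf{u})-\mathbf{p}):(\boldsymbol\varepsilon(\mathbf{v})-\mathbf{q})+\int_\Omega\mathbb{H}\mathbf{p}:\mathbf{q}$, $\boldsymbol\varepsilon(\mathbf{u})=\tfrac12(\nabla\mathbf{u}+\nabla\mathbf{u}^\top)$. $\mathcal{T}_h$ is a locally quasi-uniform mesh of convex shape-regular quadrilaterals/hexahedra with bi/trilinear bijections $\mathbf{M}_T:[-1,1]^d\to T$ and degrees $p_T\ge1$; $\mathbb{P}_p(\hat T)$ are polynomials of degree $\le p$ in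 each variable. $V_{hp}=\{\mathbf{v}\in V:\mathbf{v}|_T\circ\mathbf{M}_T\in\mathbb{P}_{p_T}(\hat T)^d\}$ with basis $\{\mathbf{e}_k\vartheta_i:k\le d,i\le M\}$. For each $T$, $\hat{\mathbf{x}}_{k,T}$ ($k\le n_T:=p_T^d$) are the tensor Gauss points and $\hat\phi_{k,T}\in\mathbb{P}_{p_T-1}(\hat T)$ the Lagrange basis at them; $\phi_1,\dots,\phi_N$ ($N=\sum_Tn_T$) equal $\hat\phi_{k,T}\circ\mathbf{M}_T^{-1}$ on $T$, $0$ elsewhere. $D_i=\int_\Omega\phi_i>0$, $\sigma_i=D_i^{-1}\int_\Omega\sigma_y\phi_i$. $L=\tfrac12(d-1)(d+2)$, $\boldsymbol\Phi_1,\dots,\boldsymbol\Phi_L$ a Frobenius-orthonormal basis of $\mathbb{S}_{d,0}$ (for $d=2$: $\tfrac1{\sqrt2}\operatorname{diag}(1,-1)$, $\tfrac1{\sqrt2}(\mathbf{e}_1\mathbf{e}_2^\top+\mathbf{e}_2\mathbf{e}_1^\top)$; for $d=3$: $\tfrac1{\sqrt2}\operatorname{diag}(1,-1,0)$, $\tfrac1{\sqrt6}\operatorname{diag}(1,1,-2)$, $\tfrac1{\sqrt2}(\mathbf{e}_j\mathbf{e}_k^\top+\mathbf{e}_k\mathbf{e}_j^\top)$ for $(j,k)=(1,2),(1,3),(2,3)$). Matrices: $A_{d(i-1)+k,d(j-1)+l}=a((\mathbf{e}_l\vartheta_j,\mathbf{0}),(\mathbf{e}_k\vartheta_i,\mathbf{0}))$;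 $C_{L(i-1)+k,L(j-1)+l}=a((\mathbf{0},\boldsymbol\Phi_l\phi_i),(\mathbf{0},\boldsymbol\Phi_k\phi_j))$; $\mathbf{D}=\operatorname{diag}(D_1\mathbf{I}_{L\times L},\dots,D_N\mathbf{I}_{L\times L})$; $B_{d(i-1)+k,L(j-1)+l}=-a((\mathbf{0},\boldsymbol\Phi_l\phi_j),(\mathbf{e}_k\vartheta_i,\mathbf{0}))$; $l_{d(i-1)+k}=-\ell(\mathbf{e}_k\vartheta_i)$. Fix $\varrho>0$. For $\mathbf{b},\mathbf{c}\in\mathbb{R}^{LN}$, $\mathbf{b}_i=(b_{L(i-1)+1},\dots,b_{Li})^\top$, $\mathbf{c}_i$ analogously, $\mathbf{v}_{\varrho,i}=\mathbf{c}_i+\varrho\mathbf{b}_i$, $\mathbf{S}_i(\mathbf{b}_i,\mathbf{c}_i)=\max\{\sigma_i,|\mathbf{v}_{\varrho,i}|\}\mathbf{c}_i-\sigma_i\mathbf{v}_{\varrho,i}$. $\mathbf{F}(\mathbf{a},\mathbf{b},\mathbf{c})=(\mathbf{A}\mathbf{a}+\mathbf{B}\mathbf{b}+\mathbf{l},\ \mathbf{B}^\top\mathbf{a}+\mathbf{C}\mathbf{b}+\mathbf{D}\mathbf{c},\ \mathbf{S}_1(\mathbf{b}_1,\mathbf{c}_1),\dots,\mathbf{S}_N(\mathbf{b}_N,\mathbf{c}_N))$; the equation $\mathbf{F}=\mathbf{0}$ has a unique solution (it is the algebraic form of the discrete mixed elastoplasticity problem). $\partial\mathbf{F}$ is the Clarke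 subdifferential; $\mathbf{x}\otimes\mathbf{y}=\mathbf{x}\mathbf{y}^\top$. A pair $(\mathbf{F},\mathbf{G})$ of real symmetric $L\times L$ matrices is eigencomplementary if $\mathbf{F}$ is negative semi-definite, $\mathbf{G}$ positive semi-definite, they share a basis of eigenvectors of $\mathbb{R}^L$, and, if both are singular, additionally $\bigoplus_{\xi\in\sigma(\mathbf{F}),\xi<0}\operatorname{Eig}_{\mathbf{F}}(\xi)=\operatorname{Eig}_{\mathbf{G}}(0)$. *)

theory Defs
  imports "HOL-Analysis.Analysis"
begin

definition outer :: "real^'l \<Rightarrow> real^'l \<Rightarrow> real^'l^'l" where
  "outer x y = (\<chi> j k. x $ j * y $ k)"

text \<open>Block i of a vector in R^(L N), indexed by pairs (block, component).\<close>
definition blk :: "real^('n::finite \<times> 'l::finite) \<Rightarrow> 'n \<Rightarrow> real^'l" where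
  "blk b i = (\<chi> k. b $ (i, k))"

text \<open>The block diagonal matrix D = diag(D_1 I, ..., D_N I) applied to c.\<close>
definition Dmul :: "('n \<Rightarrow> real) \<Rightarrow> real^('n::finite \<times> 'l::finite) \<Rightarrow> real^('n::finite \<times> 'l::finite)" where
  "Dmul D c = (\<chi> ik. D (fst ik) * c $ ik)"

definition vrho :: "real \<Rightarrow> real^('n::finite \<times> 'l::finite) \<Rightarrow> real^('n::finite \<times> 'l::finite) \<Rightarrow> 'n \<Rightarrow> real^'l" where
  "vrho \<rho> b c i = blk c i + \<rho> *\<^sub>R blk b i"

definition Sblk :: "real \<Rightarrow> ('n \<Rightarrow> real) \<Rightarrow> real^('n::finite \<times> 'l::finite) \<Rightarrow> real^('n::finite \<times> 'l::finite) \<Rightarrow> 'n \<Rightarrow> real^'l" where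
  "Sblk \<rho> \<sigma> b c i =
     max (\<sigma> i) (norm (vrho \<rho> b c i)) *\<^sub>R blk c i - \<sigma> i *\<^sub>R vrho \<rho> b c i"

definition Eig :: "real^'l^'l \<Rightarrow> real \<Rightarrow> (real^'l) set" where
  "Eig F \<xi> = {x. F *v x = \<xi> *\<^sub>R x}"

definition eigencomplementary :: "real^'l^'l \<Rightarrow> real^'l^'l \<Rightarrow> bool" where
  "eigencomplementary F G \<longleftrightarrow>
     transpose F = F \<and> transpose G = G \<and>
     (\<forall>x. x \<bullet> (F *v x) \<le> 0) \<and>
     (\<forall>x. 0 \<le> x \<bullet> (G *v x)) \<and>
     (\<exists>E. independent E \<and> span E = UNIV \<and>
          (\<forall>v\<in>E. (\<exists>\<xi>. F *v v = \<xi> *\<^sub>R v) \<and> (\<exists>\<mu>. G *v v = \<mu> *\<^sub>R v))) \<and>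
     ((\<not> invertible F \<and> \<not> invertible G) \<longrightarrow>
        span (\<Union>\<xi>\<in>{\<xi>. \<xi> < 0}. Eig F \<xi>) = Eig G 0)"

end

theory Submission
  imports Defs
begin

definition MM :: "real \<Rightarrow> real \<Rightarrow> real^'l::finite \<Rightarrow> real^'l^'l" where
  "MM \<alpha> \<beta> u = \<alpha> *\<^sub>R mat 1 + \<beta> *\<^sub>R outer u u"

lemma MM_mult: "MM \<alpha> \<beta> u *v x = \<alpha> *\<^sub>R x + (\<beta> * (u \<bullet> x)) *\<^sub>R u"
proof -
  have "MM \<alpha> \<beta> u = \<alpha> *\<^sub>R mat 1 + \<beta> *\<^sub>R outer u u" by (simp add: MM_def)
  have o: "outer u u *v x = (u \<bullet> x) *\<^sub>R u"
    by (simp add: vec_eq_iff outer_def matrix_vector_mult_def inner_vec_def sum_distrib_left mult.commute mult.left_commute)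
  show ?thesis unfolding MM_def
    by (simp add: matrix_vector_mult_add_rdistrib scaleR_matrix_vector_assoc[symmetric] o)
qed

lemma MM_sym: "transpose (MM \<alpha> \<beta> u) = MM \<alpha> \<beta> u"
  by (simp add: vec_eq_iff MM_def outer_def transpose_def mat_def mult.commute)

lemma MM_quad: "x \<bullet> (MM \<alpha> \<beta> u *v x) = \<alpha> * (norm x)^2 + \<beta> * (u \<bullet> x)^2"
proof -
  have "x \<bullet> x = (norm x)^2" by (simp add: power2_norm_eq_inner)
  thus ?thesis by (simp add: MM_mult inner_add_right inner_commute power2_eq_square)
qed

lemma MM_nsd: assumes "norm u = 1" "\<beta> \<ge> 0" "\<alpha> + \<beta> \<le> 0" "\<alpha> \<le> 0"
  shows "x \<bullet> (MM \<alpha> \<beta> u *v x) \<le> 0"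
proof -
  have "\<bar>u \<bullet> x\<bar> \<le> norm x" using Cauchy_Schwarz_ineq2[of u x] assms by simp
  hence "(u \<bullet> x)^2 \<le> (norm x)^2" by (metis abs_le_square_iff abs_norm_cancel)
  hence "\<beta> * (u \<bullet> x)^2 \<le> \<beta> * (norm x)^2" using assms by (simp add: mult_left_mono)
  moreover have "(\<alpha> + \<beta>) * (norm x)^2 \<le> 0" using assms by (simp add: mult_nonpos_nonneg)
  ultimately show ?thesis by (simp add: MM_quad algebra_simps)
qed

lemma MM_psd: assumes "\<beta> \<ge> 0" "\<alpha> \<ge> 0"
  shows "0 \<le> x \<bullet> (MM \<alpha> \<beta> u *v x)"
  using assms by (simp add: MM_quad)

lemma MM_basis: assumes u: "norm u = 1"
  shows "\<exists>E. independent E \<and> span E = UNIV \<and>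
          (\<forall>v\<in>E. (\<exists>\<xi>. MM a1 b1 u *v v = \<xi> *\<^sub>R v) \<and> (\<exists>\<mu>. MM a2 b2 u *v v = \<mu> *\<^sub>R v))"
proof -
  let ?V = "{x. u \<bullet> x = 0}"
  have sV: "subspace ?V" using subspace_orthogonal_to_vector[of u] by (simp add: orthogonal_def)
  obtain B where B: "B \<subseteq> ?V" "independent B" "?V \<subseteq> span B"
    by (rule basis_exists[of ?V]) blast
  have spB: "span B \<subseteq> ?V" using B(1) sV by (rule span_minimal)
  have uu: "u \<bullet> u = 1" using u by (simp add: norm_eq_1)
  have unot: "u \<notin> span B" using spB uu by auto
  have ind: "independent (insert u B)" using unot B(2) by (rule independent_insertI)
  have sp: "span (insert u B) = UNIV"
  proof -
    { fix x
      have "x - (u \<bullet> x) *\<^sub>R u \<in> ?V" using uu by (simp add: inner_diff_right)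
      hence "x - (u \<bullet> x) *\<^sub>R u \<in> span B" using B(3) by (rule subsetD[rotated])
      hence "x - (u \<bullet> x) *\<^sub>R u \<in> span (insert u B)" using span_mono[of B "insert u B"] by auto
      moreover have "(u \<bullet> x) *\<^sub>R u \<in> span (insert u B)" by (simp add: span_base span_scale)
      ultimately have "x - (u \<bullet> x) *\<^sub>R u + (u \<bullet> x) *\<^sub>R u \<in> span (insert u B)" by (rule span_add)
      hence "x \<in> span (insert u B)" by simp }
    thus ?thesis by auto
  qed
  have eig: "\<exists>\<xi>. MM a b u *v v = \<xi> *\<^sub>R v" if "v \<in> insert u B" for a b v
  proof -
    from that consider "v = u" | "v \<in> B" by auto
    thus ?thesis
    proof cases
      case 1 thus ?thesis by (intro exI[of _ "a+b"]) (simp add: MM_mult uu algebra_simps)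
    next
      case 2 hence "u \<bullet> v = 0" using B(1) by auto
      thus ?thesis by (intro exI[of _ "a"]) (simp add: MM_mult)
    qed
  qed
  show ?thesis
    apply (rule exI[of _ "insert u B"])
    using ind sp eig by simp
qed

lemma MM_inv: assumes "\<And>x. MM a b u *v x = 0 \<Longrightarrow> x = 0" shows "invertible (MM a b u)"
  using assms by (simp add: invertible_left_inverse matrix_left_invertible_ker)

lemma MM_ec: assumes u: "norm u = 1" and "b1 \<ge> 0" "a1 + b1 \<le> 0" "a1 \<le> 0" "a2 \<ge> 0" "b2 \<ge> 0"
  and last: "(\<not> invertible (MM a1 b1 u) \<and> \<not> invertible (MM a2 b2 u)) \<longrightarrow>
        span (\<Union>\<xi>\<in>{\<xi>. \<xi> < 0}. Eig (MM a1 b1 u) \<xi>) = Eig (MM a2 b2 u) 0"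
  shows "eigencomplementary (MM a1 b1 u) (MM a2 b2 u)"
  unfolding eigencomplementary_def
proof (intro conjI allI)
  show "transpose (MM a1 b1 u) = MM a1 b1 u" by (rule MM_sym)
  show "transpose (MM a2 b2 u) = MM a2 b2 u" by (rule MM_sym)
  fix x
  show "x \<bullet> (MM a1 b1 u *v x) \<le> 0" using assms(2-4) by (rule MM_nsd[OF u])
next
  fix x
  show "0 \<le> x \<bullet> (MM a2 b2 u *v x)" using assms(6,5) by (rule MM_psd)
next
  show "\<exists>E. independent E \<and> span E = UNIV \<and>
          (\<forall>v\<in>E. (\<exists>\<xi>. MM a1 b1 u *v v = \<xi> *\<^sub>R v) \<and> (\<exists>\<mu>. MM a2 b2 u *v v = \<mu> *\<^sub>R v))"
    by (rule MM_basis[OF u])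
  show "\<not> invertible (MM a1 b1 u) \<and> \<not> invertible (MM a2 b2 u) \<longrightarrow>
        span (\<Union>\<xi>\<in>{\<xi>. \<xi> < 0}. Eig (MM a1 b1 u) \<xi>) = Eig (MM a2 b2 u) 0" by (rule last)
qed

lemma span_cond: assumes u: "norm u = 1" and k: "k > 0" and s: "s > 0"
  shows "span (\<Union>\<xi>\<in>{\<xi>. \<xi> < 0}. Eig (MM (-k) k u) \<xi>) = Eig (MM 0 s u) 0"
proof -
  let ?V = "{x. u \<bullet> x = 0}"
  have sV: "subspace ?V" using subspace_orthogonal_to_vector[of u] by (simp add: orthogonal_def)
  have uu: "u \<bullet> u = 1" using u by (simp add: norm_eq_1)
  have u0: "u \<noteq> 0" using u by auto
  have e0: "Eig (MM 0 s u) 0 = ?V" using s u0 by (auto simp: Eig_def MM_mult)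
  have sub: "(\<Union>\<xi>\<in>{\<xi>. \<xi> < 0}. Eig (MM (-k) k u) \<xi>) \<subseteq> ?V"
  proof safe
    fix \<xi> x assume "\<xi> < 0" "x \<in> Eig (MM (-k) k u) \<xi>"
    hence "- k *\<^sub>R x + (k * (u \<bullet> x)) *\<^sub>R u = \<xi> *\<^sub>R x" by (simp add: Eig_def MM_mult)
    hence "u \<bullet> (- k *\<^sub>R x + (k * (u \<bullet> x)) *\<^sub>R u) = u \<bullet> (\<xi> *\<^sub>R x)" by simp
    hence "\<xi> * (u \<bullet> x) = 0" using uu by (simp add: inner_add_right inner_diff_right)
    thus "u \<bullet> x = 0" using \<open>\<xi> < 0\<close> by simp
  qed
  have sup: "?V \<subseteq> (\<Union>\<xi>\<in>{\<xi>. \<xi> < 0}. Eig (MM (-k) k u) \<xi>)"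
  proof
    fix x assume "x \<in> ?V"
    hence "x \<in> Eig (MM (-k) k u) (-k)" by (simp add: Eig_def MM_mult)
    thus "x \<in> (\<Union>\<xi>\<in>{\<xi>. \<xi> < 0}. Eig (MM (-k) k u) \<xi>)" using k
      by (intro UN_I[of "-k"]) auto
  qed
  have "span (\<Union>\<xi>\<in>{\<xi>. \<xi> < 0}. Eig (MM (-k) k u) \<xi>) = ?V"
    using span_minimal[OF sub sV] span_superset sup by blast
  thus ?thesis using e0 by simp
qed


theorem lemma4p2:
  fixes d :: nat and \<rho> \<sigma>\<^sub>y :: real
    and \<sigma> D :: "'n::finite \<Rightarrow> real"
    and A :: "real^'m^'m" and B :: "real^('n \<times> 'l::finite)^'m" and C :: "real^('n \<times> 'l)^('n \<times> 'l)"
    and l :: "real^'m"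
    and a :: "real^'m" and b c :: "real^('n \<times> 'l)"
    and \<tau> :: "'n \<Rightarrow> real" and X Y :: "'n \<Rightarrow> real^'l^'l"
  assumes d: "d \<in> {2, 3}"
    and L: "CARD('l) = (d - 1) * (d + 2) div 2"
    and rho: "\<rho> > 0"
    and sy: "\<sigma>\<^sub>y > 0"
    and sigma: "\<forall>i. \<sigma> i = \<sigma>\<^sub>y"
    and Dpos: "\<forall>i. D i > 0"
    and F1: "A *v a + B *v b + l = 0"
    and F2: "transpose B *v a + C *v b + Dmul D c = 0"
    and F3: "\<forall>i. Sblk \<rho> \<sigma> b c i = 0"
    and tau: "\<forall>i. 0 \<le> \<tau> i \<and> \<tau> i \<le> 1"
    and tau0: "\<forall>i. norm (vrho \<rho> b c i) < \<sigma> i \<longrightarrow> \<tau> i = 0"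
    and tau1: "\<forall>i. norm (vrho \<rho> b c i) > \<sigma> i \<longrightarrow> \<tau> i = 1"
    and Xdef: "\<forall>i. X i = (\<tau> i * \<rho>) *\<^sub>R
                 outer (blk c i) ((1 / norm (vrho \<rho> b c i)) *\<^sub>R vrho \<rho> b c i)
               - (\<rho> * \<sigma> i) *\<^sub>R mat 1"
    and Ydef: "\<forall>i. Y i = \<tau> i *\<^sub>R
                 (outer (blk c i) ((1 / norm (vrho \<rho> b c i)) *\<^sub>R vrho \<rho> b c i)
                  + (norm (vrho \<rho> b c i) - \<sigma> i) *\<^sub>R mat 1)"
  shows "\<forall>i. eigencomplementary (X i) (Y i)"
proof
  fix i
  define s where "s = \<sigma> i"
  define v where "v = vrho \<rho> b c i"
  define n where "n = norm v"
  define cc where "cc = blk c i"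
  have s0: "s > 0" unfolding s_def using sigma sy by simp
  have S0: "max s n *\<^sub>R cc - s *\<^sub>R v = 0" using F3[rule_format, of i]
    unfolding Sblk_def unfolding s_def[symmetric] v_def[symmetric] n_def[symmetric] cc_def[symmetric] .
  have S: "max s n *\<^sub>R cc = s *\<^sub>R v" using S0 by (metis right_minus_eq)
  have Xi: "X i = (\<tau> i * \<rho>) *\<^sub>R outer cc ((1 / n) *\<^sub>R v) - (\<rho> * s) *\<^sub>R mat 1"
    using Xdef[rule_format, of i] unfolding s_def[symmetric] v_def[symmetric] n_def[symmetric] cc_def[symmetric] .
  have Yi: "Y i = \<tau> i *\<^sub>R (outer cc ((1 / n) *\<^sub>R v) + (n - s) *\<^sub>R mat 1)"
    using Ydef[rule_format, of i] unfolding s_def[symmetric] v_def[symmetric] n_def[symmetric] cc_def[symmetric] .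
  have t01: "0 \<le> \<tau> i" "\<tau> i \<le> 1" using tau by auto
  have ks: "\<rho> * s > 0" using rho s0 by simp
  consider "n < s" | "n = s" | "n > s" by linarith
  then show "eigencomplementary (X i) (Y i)"
  proof cases
    case 1
    have "n < s \<longrightarrow> \<tau> i = 0" using tau0[THEN spec, of i] unfolding s_def[symmetric] v_def[symmetric] n_def[symmetric] cc_def[symmetric] .
    hence t: "\<tau> i = 0" using 1 by blast
    define u :: "real^'l" where "u = axis undefined 1"
    have u: "norm u = 1" by (simp add: u_def)
    have X: "X i = MM (- (\<rho> * s)) 0 u" using Xi t by (simp add: MM_def)
    have Y: "Y i = MM 0 0 u" using Yi t by (simp add: MM_def)
    have inv: "invertible (MM (- (\<rho> * s)) 0 u)"
      by (intro MM_inv) (use ks in \<open>auto simp: MM_mult\<close>)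
    show ?thesis unfolding X Y
      by (rule MM_ec[OF u]) (use ks inv in simp_all)
  next
    case 2
    have ccv: "cc = v" using S 2 s0 by simp
    define u where "u = (1 / s) *\<^sub>R v"
    have u: "norm u = 1" using 2 s0 by (simp add: u_def n_def)
    have cu: "cc = s *\<^sub>R u" using ccv s0 by (simp add: u_def)
    have vu: "(1 / n) *\<^sub>R v = u" using 2 by (simp add: u_def)
    have X: "X i = MM (- (\<rho> * s)) (\<tau> i * \<rho> * s) u"
      using Xi unfolding cu vu by (simp add: MM_def vec_eq_iff outer_def algebra_simps)
    have Y: "Y i = MM 0 (\<tau> i * s) u"
      using Yi 2 unfolding cu vu by (simp add: MM_def vec_eq_iff outer_def algebra_simps)
    show ?thesis
    proof (cases "\<tau> i = 1")
      case True
      have sc: "span (\<Union>\<xi>\<in>{\<xi>. \<xi> < 0}. Eig (MM (- (\<rho> * s)) (\<rho> * s) u) \<xi>) = Eig (MM 0 s u) 0"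
        by (rule span_cond[OF u ks s0])
      show ?thesis unfolding X Y
        by (rule MM_ec[OF u]) (use True ks s0 sc in simp_all)
    next
      case False
      hence tl: "\<tau> i < 1" using t01 by simp
      have inv: "invertible (MM (- (\<rho> * s)) (\<tau> i * \<rho> * s) u)"
      proof (rule MM_inv)
        fix x assume "MM (- (\<rho> * s)) (\<tau> i * \<rho> * s) u *v x = 0"
        hence e: "- (\<rho> * s) *\<^sub>R x + (\<tau> i * \<rho> * s * (u \<bullet> x)) *\<^sub>R u = 0" by (simp add: MM_mult)
        hence "u \<bullet> (- (\<rho> * s) *\<^sub>R x + (\<tau> i * \<rho> * s * (u \<bullet> x)) *\<^sub>R u) = 0" by simp
        hence "(\<rho> * s) * ((\<tau> i - 1) * (u \<bullet> x)) = 0" using u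
          by (simp add: inner_add_right norm_eq_1 algebra_simps)
        hence "(\<tau> i - 1) * (u \<bullet> x) = 0" using rho s0 by simp
        hence "u \<bullet> x = 0" using tl by auto
        thus "x = 0" using e rho s0 by simp
      qed
      have b1: "\<tau> i * \<rho> * s \<ge> 0" using t01 ks by (simp add: mult.assoc)
      have b2: "- (\<rho> * s) + \<tau> i * \<rho> * s \<le> 0" using t01 ks
        by (smt (verit) mult_left_le_one_le mult.assoc mult_nonneg_nonneg)
      show ?thesis unfolding X Y
        by (rule MM_ec[OF u]) (use ks s0 t01 inv b1 b2 in simp_all)
    qed
  next
    case 3
    have "n > s \<longrightarrow> \<tau> i = 1" using tau1[THEN spec, of i] unfolding s_def[symmetric] v_def[symmetric] n_def[symmetric] cc_def[symmetric] .
    hence t: "\<tau> i = 1" using 3 by blast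
    have n0: "n > 0" using 3 s0 by simp
    define u where "u = (1 / n) *\<^sub>R v"
    have u: "norm u = 1" using n0 by (simp add: u_def n_def)
    have "n *\<^sub>R cc = s *\<^sub>R v" using S 3 by simp
    hence "(1 / n) *\<^sub>R (n *\<^sub>R cc) = (1 / n) *\<^sub>R (s *\<^sub>R v)" by simp
    hence cu: "cc = s *\<^sub>R u" using n0 by (simp add: u_def)
    have X: "X i = MM (- (\<rho> * s)) (\<rho> * s) u"
      using Xi t unfolding cu u_def[symmetric] by (simp add: MM_def vec_eq_iff outer_def algebra_simps)
    have Y: "Y i = MM (n - s) s u"
      using Yi t unfolding cu u_def[symmetric] by (simp add: MM_def vec_eq_iff outer_def algebra_simps)
    have inv: "invertible (MM (n - s) s u)"
    proof (rule MM_inv)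
      fix x assume "MM (n - s) s u *v x = 0"
      hence e: "(n - s) *\<^sub>R x + (s * (u \<bullet> x)) *\<^sub>R u = 0" by (simp add: MM_mult)
      hence "u \<bullet> ((n - s) *\<^sub>R x + (s * (u \<bullet> x)) *\<^sub>R u) = 0" by simp
      hence "n * (u \<bullet> x) = 0" using u
        by (simp add: inner_add_right norm_eq_1 algebra_simps)
      hence "u \<bullet> x = 0" using n0 by simp
      thus "x = 0" using e 3 by simp
    qed
    show ?thesis unfolding X Y
      by (rule MM_ec[OF u]) (use ks s0 3 inv in simp_all)
  qed
qed

end
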